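(* The assignment $(G,H)\mapsto\mathcal A_{lc}(G,H)$ is a functor from $(\text{Graphs})\times(\text{Graphs})$ to $\mathbb C$-algebras which is covariant in the first factor and contravariant in the second, where morphisms of graphs are the usual graph homomorphisms.
   Context: Graphs are finite with symmetric edge sets; write $v\sim w$ for adjacency; a graph homomorphism $\phi:G\to H$ is a map $V(G)\to V(H)$ with $v\sim w\Rightarrow\phi(v)\sim\phi(w)$. For graphs $G,H$, $\mathcal A_{lc}(G,H)$ is the unital complex algebra generated by $e_{v,x}$ ($v\in V(G)$, $x\in V(H)$) with relations: $\sum_{x}e_{v,x}=1$; $e_{v,x}^2=e_{v,x}$; $e_{v,x}e_{v,y}=0$ for $x\ne y$; $e_{v,x}e_{w,y}=0$ if $v\sim w$ and $x\not\sim y$; $e_{v,x}e_{w,y}=e_{w,y}e_{v,x}$ if $v\sim w$. *)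

theory Defs
  imports Complex_Main
begin

record 'a graph =
  verts :: "'a set"
  adj :: "'a \<Rightarrow> 'a \<Rightarrow> bool"

text \<open>Finite graph with symmetric edge relation (loops not excluded).\<close>
definition is_graph :: "'a graph \<Rightarrow> bool" where
  "is_graph G \<longleftrightarrow> finite (verts G)
     \<and> (\<forall>v w. adj G v w \<longrightarrow> v \<in> verts G \<and> w \<in> verts G)
     \<and> (\<forall>v w. adj G v w \<longrightarrow> adj G w v)"

definition graph_hom :: "('a \<Rightarrow> 'b) \<Rightarrow> 'a graph \<Rightarrow> 'b graph \<Rightarrow> bool" where
  "graph_hom \<phi> G H \<longleftrightarrow> (\<forall>v\<in>verts G. \<phi> v \<in> verts H)
     \<and> (\<forall>v w. adj G v w \<longrightarrow> adj H (\<phi> v) (\<phi> w))"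

text \<open>Elements of the free algebra are finitely supported complex functions on words.\<close>
type_synonym 'a fa = "'a list \<Rightarrow> complex"

definition fa_carrier :: "'a set \<Rightarrow> 'a fa set" where
  "fa_carrier S = {f. finite {w. f w \<noteq> 0} \<and> (\<forall>w. f w \<noteq> 0 \<longrightarrow> set w \<subseteq> S)}"

definition fa_zero :: "'a fa" where "fa_zero = (\<lambda>w. 0)"
definition fa_one :: "'a fa" where "fa_one = (\<lambda>w. if w = [] then 1 else 0)"
definition fa_gen :: "'a \<Rightarrow> 'a fa" where "fa_gen a = (\<lambda>w. if w = [a] then 1 else 0)"
definition fa_add :: "'a fa \<Rightarrow> 'a fa \<Rightarrow> 'a fa" where "fa_add f g = (\<lambda>w. f w + g w)"
definition fa_diff :: "'a fa \<Rightarrow> 'a fa \<Rightarrow> 'a fa" where "fa_diff f g = (\<lambda>w. f w - g w)"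
definition fa_smult :: "complex \<Rightarrow> 'a fa \<Rightarrow> 'a fa" where "fa_smult c f = (\<lambda>w. c * f w)"
definition fa_sum :: "('i \<Rightarrow> 'a fa) \<Rightarrow> 'i set \<Rightarrow> 'a fa" where
  "fa_sum F I = (\<lambda>w. \<Sum>i\<in>I. F i w)"
definition fa_mult :: "'a fa \<Rightarrow> 'a fa \<Rightarrow> 'a fa" where
  "fa_mult f g = (\<lambda>w. \<Sum>i\<le>length w. f (take i w) * g (drop i w))"

definition fa_word_prod :: "('a \<Rightarrow> 'b fa) \<Rightarrow> 'a list \<Rightarrow> 'b fa" where
  "fa_word_prod img w = foldr (\<lambda>a acc. fa_mult (img a) acc) w fa_one"

definition fa_extend :: "('a \<Rightarrow> 'b fa) \<Rightarrow> 'a fa \<Rightarrow> 'b fa" where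
  "fa_extend img f = fa_sum (\<lambda>w. fa_smult (f w) (fa_word_prod img w)) {w. f w \<noteq> 0}"

definition lc_relators :: "'g graph \<Rightarrow> 'h graph \<Rightarrow> ('g \<times> 'h) fa set" where
  "lc_relators G H =
     {fa_diff (fa_sum (\<lambda>x. fa_gen (v, x)) (verts H)) fa_one | v. v \<in> verts G}
   \<union> {fa_diff (fa_mult (fa_gen (v, x)) (fa_gen (v, x))) (fa_gen (v, x)) | v x.
        v \<in> verts G \<and> x \<in> verts H}
   \<union> {fa_mult (fa_gen (v, x)) (fa_gen (v, y)) | v x y.
        v \<in> verts G \<and> x \<in> verts H \<and> y \<in> verts H \<and> x \<noteq> y}
   \<union> {fa_mult (fa_gen (v, x)) (fa_gen (w, y)) | v w x y.
        adj G v w \<and> x \<in> verts H \<and> y \<in> verts H \<and> \<not> adj H x y}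
   \<union> {fa_diff (fa_mult (fa_gen (v, x)) (fa_gen (w, y))) (fa_mult (fa_gen (w, y)) (fa_gen (v, x))) | v w x y.
        adj G v w \<and> x \<in> verts H \<and> y \<in> verts H}"

inductive_set lc_ideal :: "'g graph \<Rightarrow> 'h graph \<Rightarrow> ('g \<times> 'h) fa set"
  for G :: "'g graph" and H :: "'h graph" where
  rel: "r \<in> lc_relators G H \<Longrightarrow> r \<in> lc_ideal G H"
| zero: "fa_zero \<in> lc_ideal G H"
| add: "f \<in> lc_ideal G H \<Longrightarrow> g \<in> lc_ideal G H \<Longrightarrow> fa_add f g \<in> lc_ideal G H"
| smult: "f \<in> lc_ideal G H \<Longrightarrow> fa_smult c f \<in> lc_ideal G H"
| lmult: "a \<in> fa_carrier (verts G \<times> verts H) \<Longrightarrow> f \<in> lc_ideal G H \<Longrightarrow> fa_mult a f \<in> lc_ideal G H"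
| rmult: "a \<in> fa_carrier (verts G \<times> verts H) \<Longrightarrow> f \<in> lc_ideal G H \<Longrightarrow> fa_mult f a \<in> lc_ideal G H"

text \<open>Equality in A_lc(G,H) of (representatives) f and g.\<close>
definition lc_equiv :: "'g graph \<Rightarrow> 'h graph \<Rightarrow> ('g \<times> 'h) fa \<Rightarrow> ('g \<times> 'h) fa \<Rightarrow> bool" where
  "lc_equiv G H f g \<longleftrightarrow> fa_diff f g \<in> lc_ideal G H"

text \<open>Morphism part: for graph homs phi : G -> G' and psi : H' -> H, the map
  A_lc(G,H) -> A_lc(G',H') given on generators by
  e_{v,x} |-> sum over y in V(H') with psi y = x of e_{phi v, y}.\<close>
definition lc_map :: "'h2 graph \<Rightarrow> ('g1 \<Rightarrow> 'g2) \<Rightarrow> ('h2 \<Rightarrow> 'h1)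
     \<Rightarrow> ('g1 \<times> 'h1) fa \<Rightarrow> ('g2 \<times> 'h2) fa" where
  "lc_map H' \<phi> \<psi> = fa_extend (\<lambda>(v, x). fa_sum (\<lambda>y. fa_gen (\<phi> v, y)) {y \<in> verts H'. \<psi> y = x})"

end

theory Submission
  imports Defs
begin


lemma fa_mult_assoc: "fa_mult (fa_mult f g) h = fa_mult f (fa_mult g h)"
proof (rule ext)
  fix w :: "'a list"
  let ?n = "length w"
  define F where "F j k = f (take j w) * g (take k (drop j w)) * h (drop (j+k) w)" for j k
  have L: "fa_mult (fa_mult f g) h w = (\<Sum>(j,k)\<in>{(j,k). j+k \<le> ?n}. F j k)"
  proof -
    have "fa_mult (fa_mult f g) h w = (\<Sum>i\<le>?n. \<Sum>j\<le>i. F j (i - j))"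
      unfolding fa_mult_def F_def
      by (intro sum.cong refl) (auto simp: sum_distrib_right min_def drop_take intro!: sum.cong)
    then show ?thesis by (simp add: sum.triangle_reindex_eq)
  qed
  have R: "fa_mult f (fa_mult g h) w = (\<Sum>(j,k)\<in>{(j,k). j+k \<le> ?n}. F j k)"
  proof -
    have "fa_mult f (fa_mult g h) w = (\<Sum>j\<le>?n. \<Sum>k\<le>?n-j. F j k)"
      unfolding fa_mult_def F_def
      by (intro sum.cong refl) (auto simp: sum_distrib_left mult.assoc add.commute)
    also have "\<dots> = (\<Sum>(j,k)\<in>Sigma {..?n} (\<lambda>j. {..?n-j}). F j k)"
      by (rule sum.Sigma) auto
    also have "Sigma {..?n} (\<lambda>j. {..?n-j}) = {(j,k). j+k \<le> ?n}" by auto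
    finally show ?thesis .
  qed
  show "fa_mult (fa_mult f g) h w = fa_mult f (fa_mult g h) w" using L R by simp
qed



definition fa_word :: "'a list \<Rightarrow> 'a fa" where "fa_word u = (\<lambda>w. if w = u then 1 else 0)"

lemma fa_gen_word: "fa_gen a = fa_word [a]" by (simp add: fa_gen_def fa_word_def)
lemma fa_one_word: "fa_one = fa_word []" by (simp add: fa_one_def fa_word_def)

lemma fa_mult_word: "fa_mult (fa_word u) (fa_word v) = fa_word (u @ v)"
proof (rule ext)
  fix w :: "'a list"
  have eq: "(take i w = u \<and> drop i w = v) \<longleftrightarrow> (i = length u \<and> w = u @ v)" if "i \<le> length w" for i
    using that by (auto simp: min_def)
  have "fa_mult (fa_word u) (fa_word v) w = (\<Sum>i\<le>length w. if i = length u \<and> w = u @ v then 1 else 0)"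
    unfolding fa_mult_def fa_word_def by (intro sum.cong refl) (use eq in auto)
  also have "\<dots> = fa_word (u @ v) w"
    by (auto simp: fa_word_def)
  finally show "fa_mult (fa_word u) (fa_word v) w = fa_word (u @ v) w" .
qed

lemma fa_mult_one_left: "fa_mult fa_one f = f"
proof (rule ext)
  fix w :: "'a list"
  have "fa_mult fa_one f w = (\<Sum>i\<le>length w. if i = 0 then f w else 0)"
    unfolding fa_mult_def fa_one_def by (intro sum.cong refl) auto
  then show "fa_mult fa_one f w = f w" by simp
qed

lemma fa_mult_one_right: "fa_mult f fa_one = f"
proof (rule ext)
  fix w :: "'a list"
  have "fa_mult f fa_one w = (\<Sum>i\<le>length w. if i = length w then f w else 0)"
    unfolding fa_mult_def fa_one_def by (intro sum.cong refl) auto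
  then show "fa_mult f fa_one w = f w" by simp
qed

lemma fa_mult_sum_left: "fa_mult (fa_sum F I) g = fa_sum (\<lambda>i. fa_mult (F i) g) I"
  unfolding fa_mult_def fa_sum_def by (rule ext) (simp add: sum_distrib_right sum.swap[where A=I])

lemma fa_mult_sum_right: "fa_mult g (fa_sum F I) = fa_sum (\<lambda>i. fa_mult g (F i)) I"
  unfolding fa_mult_def fa_sum_def by (rule ext) (simp add: sum_distrib_left sum.swap[where A=I])

lemma fa_mult_smult_left: "fa_mult (fa_smult c f) g = fa_smult c (fa_mult f g)"
  unfolding fa_mult_def fa_smult_def by (rule ext) (simp add: sum_distrib_left mult.assoc)

lemma fa_mult_smult_right: "fa_mult f (fa_smult c g) = fa_smult c (fa_mult f g)"
  unfolding fa_mult_def fa_smult_def by (rule ext) (simp add: sum_distrib_left mult.left_commute)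

lemma fa_mult_add_left: "fa_mult (fa_add f g) h = fa_add (fa_mult f h) (fa_mult g h)"
  unfolding fa_mult_def fa_add_def by (rule ext) (simp add: distrib_right sum.distrib)

lemma fa_mult_add_right: "fa_mult h (fa_add f g) = fa_add (fa_mult h f) (fa_mult h g)"
  unfolding fa_mult_def fa_add_def by (rule ext) (simp add: distrib_left sum.distrib)

lemma fa_mult_diff_left: "fa_mult (fa_diff f g) h = fa_diff (fa_mult f h) (fa_mult g h)"
  unfolding fa_mult_def fa_diff_def by (rule ext) (simp add: left_diff_distrib sum_subtractf)

lemma fa_mult_diff_right: "fa_mult h (fa_diff f g) = fa_diff (fa_mult h f) (fa_mult h g)"
  unfolding fa_mult_def fa_diff_def by (rule ext) (simp add: right_diff_distrib sum_subtractf)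

lemma fa_word_prod_append:
  "fa_word_prod img (u @ v) = fa_mult (fa_word_prod img u) (fa_word_prod img v)"
  by (induction u) (simp_all add: fa_word_prod_def fa_mult_one_left fa_mult_assoc)

lemma fa_word_prod_Nil: "fa_word_prod img [] = fa_one" by (simp add: fa_word_prod_def)
lemma fa_word_prod_Cons: "fa_word_prod img (a # u) = fa_mult (img a) (fa_word_prod img u)"
  by (simp add: fa_word_prod_def)

lemma fa_word_prod_gen: "fa_word_prod fa_gen u = fa_word u"
  by (induction u) (simp_all add: fa_word_prod_def fa_one_word fa_gen_word fa_mult_word)

lemma carrier_mono: "S \<subseteq> T \<Longrightarrow> fa_carrier S \<subseteq> fa_carrier T"
  unfolding fa_carrier_def by blast

lemma carrier_zero: "fa_zero \<in> fa_carrier S" by (simp add: fa_carrier_def fa_zero_def)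
lemma carrier_word: "set u \<subseteq> S \<Longrightarrow> fa_word u \<in> fa_carrier S"
  by (auto simp: fa_carrier_def fa_word_def)
lemma carrier_one: "fa_one \<in> fa_carrier S" by (simp add: fa_one_word carrier_word)
lemma carrier_gen: "a \<in> S \<Longrightarrow> fa_gen a \<in> fa_carrier S" by (simp add: fa_gen_word carrier_word)

lemma carrier_add: "f \<in> fa_carrier S \<Longrightarrow> g \<in> fa_carrier S \<Longrightarrow> fa_add f g \<in> fa_carrier S"
proof -
  assume f: "f \<in> fa_carrier S" and g: "g \<in> fa_carrier S"
  have "{w. fa_add f g w \<noteq> 0} \<subseteq> {w. f w \<noteq> 0} \<union> {w. g w \<noteq> 0}" by (auto simp: fa_add_def)
  moreover have "set w \<subseteq> S" if "fa_add f g w \<noteq> 0" for w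
    using that f g by (cases "f w = 0") (auto simp: fa_add_def fa_carrier_def)
  ultimately show ?thesis using f g unfolding fa_carrier_def by (auto intro: finite_subset)
qed

lemma carrier_smult: "f \<in> fa_carrier S \<Longrightarrow> fa_smult c f \<in> fa_carrier S"
  unfolding fa_carrier_def fa_smult_def
  by (auto elim!: finite_subset[rotated])

lemma carrier_diff: "f \<in> fa_carrier S \<Longrightarrow> g \<in> fa_carrier S \<Longrightarrow> fa_diff f g \<in> fa_carrier S"
proof -
  assume f: "f \<in> fa_carrier S" and g: "g \<in> fa_carrier S"
  have "fa_diff f g = fa_add f (fa_smult (-1) g)" by (rule ext) (simp add: fa_diff_def fa_add_def fa_smult_def)
  then show ?thesis using f g by (simp add: carrier_add carrier_smult)
qed

lemma carrier_sum: "(\<And>i. i \<in> I \<Longrightarrow> F i \<in> fa_carrier S) \<Longrightarrow> fa_sum F I \<in> fa_carrier S"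
proof (cases "finite I")
  case True
  assume H: "\<And>i. i \<in> I \<Longrightarrow> F i \<in> fa_carrier S"
  have "{w. fa_sum F I w \<noteq> 0} \<subseteq> (\<Union>i\<in>I. {w. F i w \<noteq> 0})"
    unfolding fa_sum_def by (auto dest: sum.not_neutral_contains_not_neutral)
  moreover have "finite (\<Union>i\<in>I. {w. F i w \<noteq> 0})" using True H by (auto simp: fa_carrier_def)
  moreover have "set w \<subseteq> S" if "fa_sum F I w \<noteq> 0" for w
    using that H unfolding fa_sum_def fa_carrier_def by (auto dest: sum.not_neutral_contains_not_neutral)
  ultimately show ?thesis unfolding fa_carrier_def by (auto intro: finite_subset)
next
  case False then show ?thesis by (simp add: fa_sum_def fa_carrier_def)
qed

lemma carrier_mult: "f \<in> fa_carrier S \<Longrightarrow> g \<in> fa_carrier S \<Longrightarrow> fa_mult f g \<in> fa_carrier S"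
proof -
  assume f: "f \<in> fa_carrier S" and g: "g \<in> fa_carrier S"
  have key: "\<exists>i. f (take i w) \<noteq> 0 \<and> g (drop i w) \<noteq> 0" if "fa_mult f g w \<noteq> 0" for w
    using that unfolding fa_mult_def by (auto dest: sum.not_neutral_contains_not_neutral)
  have "{w. fa_mult f g w \<noteq> 0} \<subseteq> (\<lambda>(u, v). u @ v) ` ({w. f w \<noteq> 0} \<times> {w. g w \<noteq> 0})"
  proof
    fix w assume "w \<in> {w. fa_mult f g w \<noteq> 0}"
    then obtain i where "f (take i w) \<noteq> 0" "g (drop i w) \<noteq> 0" using key by blast
    then show "w \<in> (\<lambda>(u, v). u @ v) ` ({w. f w \<noteq> 0} \<times> {w. g w \<noteq> 0})"
      by (intro image_eqI[of _ _ "(take i w, drop i w)"]) auto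
  qed
  moreover have "finite ((\<lambda>(u, v). u @ v) ` ({w. f w \<noteq> 0} \<times> {w. g w \<noteq> 0}))"
    using f g by (auto simp: fa_carrier_def)
  moreover have "set w \<subseteq> S" if nz: "fa_mult f g w \<noteq> 0" for w
  proof -
    obtain i where "f (take i w) \<noteq> 0" "g (drop i w) \<noteq> 0" using key[OF nz] by blast
    then have "set (take i w) \<subseteq> S" "set (drop i w) \<subseteq> S" using f g by (auto simp: fa_carrier_def)
    then show ?thesis by (metis append_take_drop_id le_sup_iff set_append)
  qed
  ultimately show ?thesis unfolding fa_carrier_def by (auto intro: finite_subset)
qed

lemma carrier_word_prod:
  "(\<And>a. a \<in> S \<Longrightarrow> img a \<in> fa_carrier T) \<Longrightarrow> set u \<subseteq> S \<Longrightarrow> fa_word_prod img u \<in> fa_carrier T"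
  by (induction u) (auto simp: fa_word_prod_Nil fa_word_prod_Cons carrier_one carrier_mult)

lemma carrier_extend:
  assumes f: "f \<in> fa_carrier S" and img: "\<And>a. a \<in> S \<Longrightarrow> img a \<in> fa_carrier T"
  shows "fa_extend img f \<in> fa_carrier T"
  unfolding fa_extend_def
proof (intro carrier_sum carrier_smult carrier_word_prod)
  fix a assume "a \<in> S" then show "img a \<in> fa_carrier T" by (rule img)
next
  fix w assume "w \<in> {w. f w \<noteq> 0}" then show "set w \<subseteq> S" using f by (auto simp: fa_carrier_def)
qed



lemma fa_smult_smult: "fa_smult a (fa_smult b x) = fa_smult (a * b) x"
  by (rule ext) (simp add: fa_smult_def)

lemma fa_sum_empty: "fa_sum F {} = fa_zero" by (simp add: fa_sum_def fa_zero_def)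
lemma fa_sum_insert: "finite I \<Longrightarrow> i \<notin> I \<Longrightarrow> fa_sum F (insert i I) = fa_add (F i) (fa_sum F I)"
  by (rule ext) (simp add: fa_sum_def fa_add_def)

lemma ext_eq:
  assumes "finite S" "{w. f w \<noteq> 0} \<subseteq> S"
  shows "fa_extend img f = fa_sum (\<lambda>w. fa_smult (f w) (fa_word_prod img w)) S"
  unfolding fa_extend_def fa_sum_def fa_smult_def
  by (rule ext, rule sum.mono_neutral_left) (use assms in auto)

lemma ext_add:
  assumes f: "f \<in> fa_carrier UNIV" and g: "g \<in> fa_carrier UNIV"
  shows "fa_extend img (fa_add f g) = fa_add (fa_extend img f) (fa_extend img g)"
proof -
  let ?S = "{w. f w \<noteq> 0} \<union> {w. g w \<noteq> 0}"
  have fin: "finite ?S" using f g by (simp add: fa_carrier_def)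
  have "fa_extend img (fa_add f g) = fa_sum (\<lambda>w. fa_smult (fa_add f g w) (fa_word_prod img w)) ?S"
    by (rule ext_eq[OF fin]) (auto simp: fa_add_def)
  moreover have "fa_extend img f = fa_sum (\<lambda>w. fa_smult (f w) (fa_word_prod img w)) ?S"
    by (rule ext_eq[OF fin]) auto
  moreover have "fa_extend img g = fa_sum (\<lambda>w. fa_smult (g w) (fa_word_prod img w)) ?S"
    by (rule ext_eq[OF fin]) auto
  ultimately show ?thesis
    by (simp add: fa_sum_def fa_add_def fa_smult_def distrib_right sum.distrib)
qed

lemma ext_smult:
  assumes f: "f \<in> fa_carrier UNIV"
  shows "fa_extend img (fa_smult c f) = fa_smult c (fa_extend img f)"
proof -
  let ?S = "{w. f w \<noteq> 0}"
  have fin: "finite ?S" using f by (simp add: fa_carrier_def)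
  have "fa_extend img (fa_smult c f) = fa_sum (\<lambda>w. fa_smult (fa_smult c f w) (fa_word_prod img w)) ?S"
    by (rule ext_eq[OF fin]) (auto simp: fa_smult_def)
  moreover have "fa_extend img f = fa_sum (\<lambda>w. fa_smult (f w) (fa_word_prod img w)) ?S"
    by (rule ext_eq[OF fin]) auto
  ultimately show ?thesis
    by (simp add: fa_sum_def fa_smult_def sum_distrib_left mult.assoc)
qed

lemma ext_zero: "fa_extend img fa_zero = fa_zero"
  by (simp add: fa_extend_def fa_zero_def fa_sum_def)

lemma ext_diff:
  assumes f: "f \<in> fa_carrier UNIV" and g: "g \<in> fa_carrier UNIV"
  shows "fa_extend img (fa_diff f g) = fa_diff (fa_extend img f) (fa_extend img g)"
proof -
  have d: "fa_diff a b = fa_add a (fa_smult (-1) b)" for a b :: "'x fa"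
    by (rule ext) (simp add: fa_diff_def fa_add_def fa_smult_def)
  show ?thesis using f g by (simp add: d ext_add ext_smult carrier_smult)
qed

lemma ext_sum:
  assumes "finite I" "\<And>i. i \<in> I \<Longrightarrow> F i \<in> fa_carrier UNIV"
  shows "fa_extend img (fa_sum F I) = fa_sum (\<lambda>i. fa_extend img (F i)) I"
  using assms
proof (induction I rule: finite_induct)
  case empty then show ?case by (simp add: fa_sum_empty ext_zero)
next
  case (insert i I)
  then show ?case by (simp add: fa_sum_insert ext_add carrier_sum)
qed

lemma ext_word: "fa_extend img (fa_word u) = fa_word_prod img u"
proof -
  have "fa_extend img (fa_word u) = fa_sum (\<lambda>w. fa_smult (fa_word u w) (fa_word_prod img w)) {u}"
    by (rule ext_eq) (auto simp: fa_word_def)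
  then show ?thesis by (simp add: fa_sum_def fa_smult_def fa_word_def)
qed

lemma ext_one: "fa_extend img fa_one = fa_one"
  by (simp add: fa_one_word ext_word fa_word_prod_Nil)

lemma ext_gen: "fa_extend img (fa_gen a) = img a"
  by (simp add: fa_gen_word ext_word fa_word_prod_Cons fa_word_prod_Nil fa_mult_one_right)

lemma decomp:
  assumes "f \<in> fa_carrier UNIV"
  shows "f = fa_sum (\<lambda>u. fa_smult (f u) (fa_word u)) {w. f w \<noteq> 0}"
proof (rule ext)
  fix x
  have fin: "finite {w. f w \<noteq> 0}" using assms by (simp add: fa_carrier_def)
  have "fa_sum (\<lambda>u. fa_smult (f u) (fa_word u)) {w. f w \<noteq> 0} x = (\<Sum>i\<in>{w. f w \<noteq> 0}. if i = x then f i else 0)"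
    unfolding fa_sum_def fa_smult_def fa_word_def by (rule sum.cong) auto
  also have "\<dots> = f x" using fin by (simp add: sum.delta)
  finally show "f x = fa_sum (\<lambda>u. fa_smult (f u) (fa_word u)) {w. f w \<noteq> 0} x" by simp
qed

lemma fa_smult_sum: "fa_smult c (fa_sum F I) = fa_sum (\<lambda>i. fa_smult c (F i)) I"
  by (rule ext) (simp add: fa_smult_def fa_sum_def sum_distrib_left)

lemma ext_mult:
  assumes f: "f \<in> fa_carrier UNIV" and g: "g \<in> fa_carrier UNIV"
  shows "fa_extend img (fa_mult f g) = fa_mult (fa_extend img f) (fa_extend img g)"
proof -
  let ?Sf = "{w. f w \<noteq> 0}" and ?Sg = "{w. g w \<noteq> 0}"
  have finf: "finite ?Sf" and fing: "finite ?Sg" using f g by (auto simp: fa_carrier_def)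
  have "fa_mult f g = fa_mult (fa_sum (\<lambda>u. fa_smult (f u) (fa_word u)) ?Sf)
                              (fa_sum (\<lambda>u. fa_smult (g u) (fa_word u)) ?Sg)"
    using decomp[OF f] decomp[OF g] by simp
  also have "\<dots> = fa_sum (\<lambda>v. fa_sum (\<lambda>u. fa_smult (f u * g v) (fa_word (u @ v))) ?Sf) ?Sg"
    by (simp add: fa_smult_sum fa_mult_sum_left fa_mult_sum_right fa_mult_smult_left fa_mult_smult_right
                  fa_mult_word fa_smult_smult mult.commute)
  finally have fg: "fa_mult f g = \<dots>" .
  have "fa_extend img (fa_mult f g) =
      fa_sum (\<lambda>v. fa_sum (\<lambda>u. fa_smult (f u * g v) (fa_word_prod img (u @ v))) ?Sf) ?Sg"
    unfolding fg using finf fing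
    by (simp add: ext_sum ext_smult ext_word carrier_sum carrier_smult carrier_word)
  also have "\<dots> = fa_mult (fa_sum (\<lambda>u. fa_smult (f u) (fa_word_prod img u)) ?Sf)
                          (fa_sum (\<lambda>u. fa_smult (g u) (fa_word_prod img u)) ?Sg)"
    by (simp add: fa_smult_sum fa_mult_sum_left fa_mult_sum_right fa_mult_smult_left fa_mult_smult_right
                  fa_word_prod_append fa_smult_smult mult.commute)
  also have "\<dots> = fa_mult (fa_extend img f) (fa_extend img g)"
    by (simp add: fa_extend_def)
  finally show ?thesis .
qed

lemma wp_carrier: "(\<And>a. img1 a \<in> fa_carrier UNIV) \<Longrightarrow> fa_word_prod img1 u \<in> fa_carrier UNIV"
  by (rule carrier_word_prod) auto

lemma ext_word_prod_comp:
  assumes "\<And>a. img1 a \<in> fa_carrier UNIV"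
  shows "fa_extend img2 (fa_word_prod img1 u) = fa_word_prod (\<lambda>a. fa_extend img2 (img1 a)) u"
  by (induction u) (simp_all add: fa_word_prod_Nil fa_word_prod_Cons ext_one ext_mult assms
      wp_carrier)

lemma ext_comp:
  assumes f: "f \<in> fa_carrier UNIV" and img1: "\<And>a. img1 a \<in> fa_carrier UNIV"
  shows "fa_extend img2 (fa_extend img1 f) = fa_extend (\<lambda>a. fa_extend img2 (img1 a)) f"
proof -
  have fin: "finite {w. f w \<noteq> 0}" using f by (simp add: fa_carrier_def)
  show ?thesis
    unfolding fa_extend_def[of img1] fa_extend_def[of "\<lambda>a. fa_extend img2 (img1 a)"]
    using fin img1 by (simp add: ext_sum ext_smult ext_word_prod_comp carrier_smult wp_carrier)
qed

lemma word_prod_cong: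
  "(\<And>a. a \<in> S \<Longrightarrow> img a = img' a) \<Longrightarrow> set u \<subseteq> S \<Longrightarrow> fa_word_prod img u = fa_word_prod img' u"
  by (induction u) (simp_all add: fa_word_prod_Nil fa_word_prod_Cons)

lemma ext_cong:
  assumes f: "f \<in> fa_carrier S" and img: "\<And>a. a \<in> S \<Longrightarrow> img a = img' a"
  shows "fa_extend img f = fa_extend img' f"
  unfolding fa_extend_def fa_sum_def
  by (rule ext, rule sum.cong[OF refl]) (use f img word_prod_cong[of S img img'] in \<open>auto simp: fa_carrier_def\<close>)

lemma ext_gen_id: "f \<in> fa_carrier UNIV \<Longrightarrow> fa_extend fa_gen f = f"
  unfolding fa_extend_def fa_word_prod_gen
  by (rule decomp[symmetric])



lemma ideal_diff: "f \<in> lc_ideal G H \<Longrightarrow> g \<in> lc_ideal G H \<Longrightarrow> fa_diff f g \<in> lc_ideal G H"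
proof -
  assume "f \<in> lc_ideal G H" "g \<in> lc_ideal G H"
  moreover have "fa_diff f g = fa_add f (fa_smult (-1) g)"
    by (rule ext) (simp add: fa_diff_def fa_add_def fa_smult_def)
  ultimately show ?thesis by (simp add: lc_ideal.add lc_ideal.smult)
qed

lemma ideal_sum: "finite A \<Longrightarrow> (\<And>i. i \<in> A \<Longrightarrow> F i \<in> lc_ideal G H) \<Longrightarrow> fa_sum F A \<in> lc_ideal G H"
  by (induction A rule: finite_induct) (simp_all add: fa_sum_empty fa_sum_insert lc_ideal.zero lc_ideal.add)

lemma diff_self: "fa_diff f f = fa_zero" by (rule ext) (simp add: fa_diff_def fa_zero_def)

lemma gen_cU: "fa_gen a \<in> fa_carrier UNIV" by (simp add: carrier_gen)
lemma sum_gen_cU: "fa_sum (\<lambda>y. fa_gen (f y)) A \<in> fa_carrier UNIV" by (rule carrier_sum) (simp add: carrier_gen)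

lemma relators_carrier:
  assumes "is_graph G" "r \<in> lc_relators G H"
  shows "r \<in> fa_carrier (verts G \<times> verts H)"
proof -
  have adjv: "adj G v w \<Longrightarrow> v \<in> verts G \<and> w \<in> verts G" for v w using assms(1) by (simp add: is_graph_def)
  show ?thesis using assms(2) unfolding lc_relators_def
    by (elim UnE CollectE exE conjE; simp only:;
        intro carrier_diff carrier_sum carrier_gen carrier_one carrier_mult; use adjv in blast)
qed

lemma ideal_carrier:
  assumes "is_graph G" "f \<in> lc_ideal G H"
  shows "f \<in> fa_carrier (verts G \<times> verts H)"
  using assms(2)
  by (induction rule: lc_ideal.induct)
     (auto intro: relators_carrier[OF assms(1)] carrier_zero carrier_add carrier_smult carrier_mult)

lemma ideal_cU: "is_graph G \<Longrightarrow> f \<in> lc_ideal G H \<Longrightarrow> f \<in> fa_carrier UNIV"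
  by (rule subsetD[OF carrier_mono[OF subset_UNIV] ideal_carrier])

lemma rel_mem: "r \<in> lc_relators G H \<Longrightarrow> r \<in> lc_ideal G H" by (rule lc_ideal.rel)

lemma map_gen: "lc_map H' \<phi> \<psi> (fa_gen (v, x)) = fa_sum (\<lambda>y. fa_gen (\<phi> v, y)) {y \<in> verts H'. \<psi> y = x}"
  by (simp add: lc_map_def ext_gen)

lemma map_img_cU: "(\<lambda>(v, x). fa_sum (\<lambda>y. fa_gen (\<phi> v, y)) {y \<in> verts H'. \<psi> y = x}) a \<in> fa_carrier UNIV"
  by (cases a) (simp add: sum_gen_cU)

lemma sum_prod_expand:
  "fa_mult (fa_sum F A) (fa_sum G B) = fa_sum (\<lambda>a. fa_sum (\<lambda>b. fa_mult (F a) (G b)) B) A"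
  unfolding fa_mult_sum_left unfolding fa_mult_sum_right ..

lemma relI1: "v \<in> verts G \<Longrightarrow> fa_diff (fa_sum (\<lambda>x. fa_gen (v, x)) (verts H)) fa_one \<in> lc_ideal G H"
  by (rule lc_ideal.rel, unfold lc_relators_def, rule UnI1, rule UnI1, rule UnI1, rule UnI1) blast
lemma relI2: "v \<in> verts G \<Longrightarrow> x \<in> verts H \<Longrightarrow> fa_diff (fa_mult (fa_gen (v, x)) (fa_gen (v, x))) (fa_gen (v, x)) \<in> lc_ideal G H"
  by (rule lc_ideal.rel, unfold lc_relators_def, rule UnI1, rule UnI1, rule UnI1, rule UnI2) blast
lemma relI3: "v \<in> verts G \<Longrightarrow> x \<in> verts H \<Longrightarrow> y \<in> verts H \<Longrightarrow> x \<noteq> y \<Longrightarrow> fa_mult (fa_gen (v, x)) (fa_gen (v, y)) \<in> lc_ideal G H"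
  by (rule lc_ideal.rel, unfold lc_relators_def, rule UnI1, rule UnI1, rule UnI2) blast
lemma relI4: "adj G v w \<Longrightarrow> x \<in> verts H \<Longrightarrow> y \<in> verts H \<Longrightarrow> \<not> adj H x y \<Longrightarrow> fa_mult (fa_gen (v, x)) (fa_gen (w, y)) \<in> lc_ideal G H"
  by (rule lc_ideal.rel, unfold lc_relators_def, rule UnI1, rule UnI2) blast
lemma relI5: "adj G v w \<Longrightarrow> x \<in> verts H \<Longrightarrow> y \<in> verts H \<Longrightarrow> fa_diff (fa_mult (fa_gen (v, x)) (fa_gen (w, y))) (fa_mult (fa_gen (w, y)) (fa_gen (v, x))) \<in> lc_ideal G H"
  by (rule lc_ideal.rel, unfold lc_relators_def, rule UnI2) blast



lemma map_rel:
  assumes gG1: "is_graph G1" and gG2: "is_graph G2" and gH1: "is_graph H1" and gH2: "is_graph H2"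
    and h\<phi>: "graph_hom \<phi> G1 G2" and h\<psi>: "graph_hom \<psi> H2 H1"
    and r: "r \<in> lc_relators G1 H1"
  shows "lc_map H2 \<phi> \<psi> r \<in> lc_ideal G2 H2"
proof -
  let ?M = "lc_map H2 \<phi> \<psi>"
  define E where "E v x = fa_sum (\<lambda>y. fa_gen (\<phi> v, y)) {y \<in> verts H2. \<psi> y = x}" for v x
  have finH1: "finite (verts H1)" and finH2: "finite (verts H2)"
    using gH1 gH2 by (auto simp: is_graph_def)
  have finA: "finite {y \<in> verts H2. \<psi> y = x}" for x using finH2 by simp
  have \<phi>v: "v \<in> verts G1 \<Longrightarrow> \<phi> v \<in> verts G2" for v using h\<phi> by (simp add: graph_hom_def)
  have \<phi>adj: "adj G1 v w \<Longrightarrow> adj G2 (\<phi> v) (\<phi> w)" for v w using h\<phi> by (simp add: graph_hom_def)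
  have \<psi>v: "y \<in> verts H2 \<Longrightarrow> \<psi> y \<in> verts H1" for y using h\<psi> by (simp add: graph_hom_def)
  have \<psi>adj: "adj H2 a b \<Longrightarrow> adj H1 (\<psi> a) (\<psi> b)" for a b using h\<psi> by (simp add: graph_hom_def)
  have adjv: "adj G1 v w \<Longrightarrow> v \<in> verts G1 \<and> w \<in> verts G1" for v w using gG1 by (simp add: is_graph_def)
  have Mg: "?M (fa_gen (v, x)) = E v x" for v x by (simp add: map_gen E_def)
  have Mgg: "?M (fa_mult (fa_gen (v, x)) (fa_gen (w, y))) = fa_mult (E v x) (E w y)" for v x w y
    by (simp add: lc_map_def ext_mult gen_cU Mg[unfolded lc_map_def])
  have EE: "fa_mult (E v x) (E w y) = fa_sum (\<lambda>a. fa_sum (\<lambda>b. fa_mult (fa_gen (\<phi> v, a)) (fa_gen (\<phi> w, b)))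
       {b \<in> verts H2. \<psi> b = y}) {a \<in> verts H2. \<psi> a = x}" for v x w y
    unfolding E_def by (rule sum_prod_expand)
  have Md: "f \<in> fa_carrier UNIV \<Longrightarrow> g \<in> fa_carrier UNIV \<Longrightarrow> ?M (fa_diff f g) = fa_diff (?M f) (?M g)" for f g
    by (simp add: lc_map_def ext_diff)
  have R: "\<And>q. q \<in> lc_relators G2 H2 \<Longrightarrow> q \<in> lc_ideal G2 H2" by (rule rel_mem)
  show ?thesis using r unfolding lc_relators_def
  proof (elim UnE CollectE exE conjE)
    fix v assume eq: "r = fa_diff (fa_sum (\<lambda>x. fa_gen (v, x)) (verts H1)) fa_one" and v: "v \<in> verts G1"
    have "?M r = fa_diff (fa_sum (\<lambda>x. E v x) (verts H1)) fa_one"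
      unfolding eq lc_map_def
      by (simp add: ext_diff ext_sum finH1 gen_cU sum_gen_cU carrier_one ext_one Mg[unfolded lc_map_def])
    also have "fa_sum (\<lambda>x. E v x) (verts H1) = fa_sum (\<lambda>y. fa_gen (\<phi> v, y)) (verts H2)"
      unfolding E_def fa_sum_def
      by (rule ext, rule sum.group[OF finH2 finH1]) (use \<psi>v in auto)
    finally show "?M r \<in> lc_ideal G2 H2"
      using \<phi>v[OF v] by (simp add: relI1)
  next
    fix v x assume eq: "r = fa_diff (fa_mult (fa_gen (v, x)) (fa_gen (v, x))) (fa_gen (v, x))"
      and v: "v \<in> verts G1" and x: "x \<in> verts H1"
    let ?A = "{y \<in> verts H2. \<psi> y = x}"
    let ?e = "\<lambda>a. fa_gen (\<phi> v, a)"
    have "?M r = fa_diff (fa_mult (E v x) (E v x)) (E v x)"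
      unfolding eq by (simp add: Md carrier_mult gen_cU Mgg Mg)
    also have "\<dots> = fa_sum (\<lambda>a. fa_add (fa_diff (fa_mult (?e a) (?e a)) (?e a))
                      (fa_sum (\<lambda>b. fa_mult (?e a) (?e b)) (?A - {a}))) ?A"
    proof -
      have s: "(\<Sum>a\<in>?A. \<Sum>b\<in>?A. X a b) = (\<Sum>a\<in>?A. X a a + (\<Sum>b\<in>?A - {a}. X a b))" for X :: "_ \<Rightarrow> _ \<Rightarrow> complex"
        by (rule sum.cong[OF refl]) (simp add: sum.remove[OF finA])
      show ?thesis unfolding EE
        by (rule ext) (simp add: E_def fa_sum_def fa_diff_def fa_add_def s sum.distrib sum_subtractf)
    qed
    finally have eq2: "?M r = \<dots>" .
    show "?M r \<in> lc_ideal G2 H2"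
      unfolding eq2 using \<phi>v[OF v] by (intro ideal_sum lc_ideal.add finA relI2 relI3) (auto simp: finA)
  next
    fix v x y assume eq: "r = fa_mult (fa_gen (v, x)) (fa_gen (v, y))"
      and v: "v \<in> verts G1" and x: "x \<in> verts H1" and y: "y \<in> verts H1" and xy: "x \<noteq> y"
    have eq2: "?M r = fa_mult (E v x) (E v y)" unfolding eq by (rule Mgg)
    show "?M r \<in> lc_ideal G2 H2"
      unfolding eq2 using \<phi>v[OF v] xy unfolding EE by (intro ideal_sum finA relI3) (auto simp: finA)
  next
    fix v w x y assume eq: "r = fa_mult (fa_gen (v, x)) (fa_gen (w, y))"
      and vw: "adj G1 v w" and x: "x \<in> verts H1" and y: "y \<in> verts H1" and nxy: "\<not> adj H1 x y"
    have eq2: "?M r = fa_mult (E v x) (E w y)" unfolding eq by (rule Mgg)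
    show "?M r \<in> lc_ideal G2 H2"
      unfolding eq2 using \<phi>adj[OF vw] nxy \<psi>adj unfolding EE by (intro ideal_sum finA relI4) (auto simp: finA)
  next
    fix v w x y assume eq: "r = fa_diff (fa_mult (fa_gen (v, x)) (fa_gen (w, y))) (fa_mult (fa_gen (w, y)) (fa_gen (v, x)))"
      and vw: "adj G1 v w" and x: "x \<in> verts H1" and y: "y \<in> verts H1"
    have "?M r = fa_diff (fa_mult (E v x) (E w y)) (fa_mult (E w y) (E v x))"
      unfolding eq by (simp add: Md carrier_mult gen_cU Mgg)
    also have "\<dots> = fa_sum (\<lambda>a. fa_sum (\<lambda>b. fa_diff (fa_mult (fa_gen (\<phi> v, a)) (fa_gen (\<phi> w, b)))
                   (fa_mult (fa_gen (\<phi> w, b)) (fa_gen (\<phi> v, a)))) {b \<in> verts H2. \<psi> b = y}) {a \<in> verts H2. \<psi> a = x}"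
      unfolding EE
      by (rule ext) (simp add: fa_sum_def fa_diff_def sum_subtractf sum.swap[where A="{b \<in> verts H2. \<psi> b = y}"])
    finally have eq2: "?M r = \<dots>" .
    show "?M r \<in> lc_ideal G2 H2"
      unfolding eq2 using \<phi>adj[OF vw] by (intro ideal_sum finA relI5) (auto simp: finA)
  qed
qed



lemma map_carrier:
  assumes h\<phi>: "graph_hom \<phi> G1 G2" and f: "f \<in> fa_carrier (verts G1 \<times> verts H1)"
  shows "lc_map H2 \<phi> \<psi> f \<in> fa_carrier (verts G2 \<times> verts H2)"
  unfolding lc_map_def
proof (rule carrier_extend[OF f])
  fix a assume a: "a \<in> verts G1 \<times> verts H1"
  obtain v x where ax: "a = (v, x)" by (cases a)
  have "\<phi> v \<in> verts G2" using a ax h\<phi> by (auto simp: graph_hom_def)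
  then show "(\<lambda>(v, x). fa_sum (\<lambda>y. fa_gen (\<phi> v, y)) {y \<in> verts H2. \<psi> y = x}) a \<in> fa_carrier (verts G2 \<times> verts H2)"
    unfolding ax by (simp, intro carrier_sum carrier_gen) auto
qed

lemma map_cU: "f \<in> fa_carrier S \<Longrightarrow> f \<in> fa_carrier UNIV"
  by (rule subsetD[OF carrier_mono[OF subset_UNIV]])

lemma map_ideal:
  assumes gG1: "is_graph G1" and gG2: "is_graph G2" and gH1: "is_graph H1" and gH2: "is_graph H2"
    and h\<phi>: "graph_hom \<phi> G1 G2" and h\<psi>: "graph_hom \<psi> H2 H1"
    and f: "f \<in> lc_ideal G1 H1"
  shows "lc_map H2 \<phi> \<psi> f \<in> lc_ideal G2 H2"
  using f
proof (induction rule: lc_ideal.induct)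
  case (rel r) then show ?case by (rule map_rel[OF gG1 gG2 gH1 gH2 h\<phi> h\<psi>])
next
  case zero then show ?case by (simp add: lc_map_def ext_zero lc_ideal.zero)
next
  case (add f g)
  then show ?case using ideal_cU[OF gG1 add.hyps(1)] ideal_cU[OF gG1 add.hyps(2)]
    by (simp add: lc_map_def ext_add lc_ideal.add)
next
  case (smult f c)
  then show ?case using ideal_cU[OF gG1 smult.hyps(1)]
    by (simp add: lc_map_def ext_smult lc_ideal.smult)
next
  case (lmult a f)
  have "lc_map H2 \<phi> \<psi> (fa_mult a f) = fa_mult (lc_map H2 \<phi> \<psi> a) (lc_map H2 \<phi> \<psi> f)"
    using map_cU[OF lmult.hyps(1)] ideal_cU[OF gG1 lmult.hyps(2)] by (simp add: lc_map_def ext_mult)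
  then show ?case by (simp only:) (rule lc_ideal.lmult[OF map_carrier[OF h\<phi> lmult.hyps(1)] lmult.IH])
next
  case (rmult a f)
  have "lc_map H2 \<phi> \<psi> (fa_mult f a) = fa_mult (lc_map H2 \<phi> \<psi> f) (lc_map H2 \<phi> \<psi> a)"
    using map_cU[OF rmult.hyps(1)] ideal_cU[OF gG1 rmult.hyps(2)] by (simp add: lc_map_def ext_mult)
  then show ?case by (simp only:) (rule lc_ideal.rmult[OF map_carrier[OF h\<phi> rmult.hyps(1)] rmult.IH])
qed

lemma map_id:
  assumes f: "f \<in> fa_carrier (verts G1 \<times> verts H1)"
  shows "lc_map H1 id id f = f"
proof -
  have "lc_map H1 id id f = fa_extend fa_gen f"
    unfolding lc_map_def
  proof (rule ext_cong[OF f])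
    fix a assume a: "a \<in> verts G1 \<times> verts H1"
    obtain v x where ax: "a = (v, x)" by (cases a)
    have "{y \<in> verts H1. id y = x} = {x}" using a ax by auto
    then show "(\<lambda>(v, x). fa_sum (\<lambda>y. fa_gen (id v, y)) {y \<in> verts H1. id y = x}) a = fa_gen a"
      unfolding ax by (simp add: fa_sum_def)
  qed
  also have "\<dots> = f" by (rule ext_gen_id[OF map_cU[OF f]])
  finally show ?thesis .
qed

lemma map_comp:
  assumes gH2: "is_graph H2" and gH3: "is_graph H3" and h\<psi>2: "graph_hom \<psi>2 H3 H2"
    and f: "f \<in> fa_carrier (verts G1 \<times> verts H1)"
  shows "lc_map H3 \<phi>2 \<psi>2 (lc_map H2 \<phi>1 \<psi>1 f) = lc_map H3 (\<phi>2 \<circ> \<phi>1) (\<psi>1 \<circ> \<psi>2) f"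
proof -
  have finH2: "finite (verts H2)" using gH2 by (simp add: is_graph_def)
  have \<psi>v: "z \<in> verts H3 \<Longrightarrow> \<psi>2 z \<in> verts H2" for z using h\<psi>2 by (simp add: graph_hom_def)
  have "lc_map H3 \<phi>2 \<psi>2 (lc_map H2 \<phi>1 \<psi>1 f)
      = fa_extend (\<lambda>a. lc_map H3 \<phi>2 \<psi>2 ((\<lambda>(v, x). fa_sum (\<lambda>y. fa_gen (\<phi>1 v, y)) {y \<in> verts H2. \<psi>1 y = x}) a)) f"
    unfolding lc_map_def[of H2]
    by (unfold lc_map_def, rule ext_comp[OF map_cU[OF f] map_img_cU])
  also have "\<dots> = lc_map H3 (\<phi>2 \<circ> \<phi>1) (\<psi>1 \<circ> \<psi>2) f"
    unfolding lc_map_def[of H3 "\<phi>2 \<circ> \<phi>1"]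
  proof (rule ext_cong[OF f])
    fix a assume a: "a \<in> verts G1 \<times> verts H1"
    obtain v x where ax: "a = (v, x)" by (cases a)
    let ?A = "{y \<in> verts H2. \<psi>1 y = x}"
    have finA: "finite ?A" using finH2 by simp
    have "lc_map H3 \<phi>2 \<psi>2 (fa_sum (\<lambda>y. fa_gen (\<phi>1 v, y)) ?A)
        = fa_sum (\<lambda>y. fa_sum (\<lambda>z. fa_gen (\<phi>2 (\<phi>1 v), z)) {z \<in> verts H3. \<psi>2 z = y}) ?A"
      unfolding lc_map_def using finA by (simp add: ext_sum gen_cU ext_gen)
    also have "\<dots> = fa_sum (\<lambda>z. fa_gen (\<phi>2 (\<phi>1 v), z)) {z \<in> verts H3. (\<psi>1 \<circ> \<psi>2) z = x}"
    proof (rule ext)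
      fix w
      have fin3: "finite {z \<in> verts H3. (\<psi>1 \<circ> \<psi>2) z = x}"
        using gH3 by (simp add: is_graph_def)
      have "(\<Sum>y\<in>?A. \<Sum>z\<in>{z \<in> verts H3. \<psi>2 z = y}. fa_gen (\<phi>2 (\<phi>1 v), z) w)
          = (\<Sum>y\<in>?A. \<Sum>z\<in>{z. z \<in> {z \<in> verts H3. (\<psi>1 \<circ> \<psi>2) z = x} \<and> \<psi>2 z = y}. fa_gen (\<phi>2 (\<phi>1 v), z) w)"
        by (rule sum.cong[OF refl], rule sum.cong) auto
      also have "\<dots> = (\<Sum>z\<in>{z \<in> verts H3. (\<psi>1 \<circ> \<psi>2) z = x}. fa_gen (\<phi>2 (\<phi>1 v), z) w)"
        by (rule sum.group[OF fin3 finA]) (use \<psi>v in auto)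
      finally show "fa_sum (\<lambda>y. fa_sum (\<lambda>z. fa_gen (\<phi>2 (\<phi>1 v), z)) {z \<in> verts H3. \<psi>2 z = y}) ?A w
          = fa_sum (\<lambda>z. fa_gen (\<phi>2 (\<phi>1 v), z)) {z \<in> verts H3. (\<psi>1 \<circ> \<psi>2) z = x} w"
        by (simp add: fa_sum_def)
    qed
    finally show "lc_map H3 \<phi>2 \<psi>2 ((\<lambda>(v, x). fa_sum (\<lambda>y. fa_gen (\<phi>1 v, y)) {y \<in> verts H2. \<psi>1 y = x}) a)
        = (\<lambda>(v, x). fa_sum (\<lambda>y. fa_gen ((\<phi>2 \<circ> \<phi>1) v, y)) {y \<in> verts H3. (\<psi>1 \<circ> \<psi>2) y = x}) a"
      unfolding ax by simp
  qed
  finally show ?thesis .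
qed


theorem mainTheorem8:
  fixes G1 :: "'g1 graph" and G2 :: "'g2 graph" and G3 :: "'g3 graph"
    and H1 :: "'h1 graph" and H2 :: "'h2 graph" and H3 :: "'h3 graph"
    and \<phi>1 :: "'g1 \<Rightarrow> 'g2" and \<phi>2 :: "'g2 \<Rightarrow> 'g3"
    and \<psi>1 :: "'h2 \<Rightarrow> 'h1" and \<psi>2 :: "'h3 \<Rightarrow> 'h2"
  assumes "is_graph G1" "is_graph G2" "is_graph G3"
    and "is_graph H1" "is_graph H2" "is_graph H3"
    and "graph_hom \<phi>1 G1 G2" "graph_hom \<phi>2 G2 G3"
    and "graph_hom \<psi>1 H2 H1" "graph_hom \<psi>2 H3 H2"
  shows
    \<comment> \<open>the morphism (phi1, psi1) induces a unital algebra hom A_lc(G1,H1) -> A_lc(G2,H2)\<close>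
    "(\<forall>f \<in> fa_carrier (verts G1 \<times> verts H1).
        lc_map H2 \<phi>1 \<psi>1 f \<in> fa_carrier (verts G2 \<times> verts H2))
   \<and> (\<forall>f \<in> lc_ideal G1 H1. lc_map H2 \<phi>1 \<psi>1 f \<in> lc_ideal G2 H2)
   \<and> lc_map H2 \<phi>1 \<psi>1 fa_one = fa_one
   \<and> (\<forall>f \<in> fa_carrier (verts G1 \<times> verts H1). \<forall>g \<in> fa_carrier (verts G1 \<times> verts H1).
        lc_map H2 \<phi>1 \<psi>1 (fa_add f g) = fa_add (lc_map H2 \<phi>1 \<psi>1 f) (lc_map H2 \<phi>1 \<psi>1 g)
      \<and> lc_map H2 \<phi>1 \<psi>1 (fa_mult f g) = fa_mult (lc_map H2 \<phi>1 \<psi>1 f) (lc_map H2 \<phi>1 \<psi>1 g))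
   \<and> (\<forall>c. \<forall>f \<in> fa_carrier (verts G1 \<times> verts H1).
        lc_map H2 \<phi>1 \<psi>1 (fa_smult c f) = fa_smult c (lc_map H2 \<phi>1 \<psi>1 f))
    \<comment> \<open>identities go to identities\<close>
   \<and> (\<forall>f \<in> fa_carrier (verts G1 \<times> verts H1). lc_equiv G1 H1 (lc_map H1 id id f) f)
    \<comment> \<open>composition: (phi2, psi2) o (phi1, psi1) = (phi2 o phi1, psi1 o psi2)\<close>
   \<and> (\<forall>f \<in> fa_carrier (verts G1 \<times> verts H1).
        lc_equiv G3 H3 (lc_map H3 \<phi>2 \<psi>2 (lc_map H2 \<phi>1 \<psi>1 f))
                       (lc_map H3 (\<phi>2 \<circ> \<phi>1) (\<psi>1 \<circ> \<psi>2) f))"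
  proof -
  have P1: "\<forall>f \<in> fa_carrier (verts G1 \<times> verts H1).
        lc_map H2 \<phi>1 \<psi>1 f \<in> fa_carrier (verts G2 \<times> verts H2)"
    using map_carrier[OF assms(7)] by blast
  have P2: "\<forall>f \<in> lc_ideal G1 H1. lc_map H2 \<phi>1 \<psi>1 f \<in> lc_ideal G2 H2"
    using map_ideal[OF assms(1,2,4,5,7,9)] by blast
  have P3: "lc_map H2 \<phi>1 \<psi>1 fa_one = fa_one" by (simp add: lc_map_def ext_one)
  have P4: "\<forall>f \<in> fa_carrier (verts G1 \<times> verts H1). \<forall>g \<in> fa_carrier (verts G1 \<times> verts H1).
        lc_map H2 \<phi>1 \<psi>1 (fa_add f g) = fa_add (lc_map H2 \<phi>1 \<psi>1 f) (lc_map H2 \<phi>1 \<psi>1 g)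
      \<and> lc_map H2 \<phi>1 \<psi>1 (fa_mult f g) = fa_mult (lc_map H2 \<phi>1 \<psi>1 f) (lc_map H2 \<phi>1 \<psi>1 g)"
  proof (intro ballI conjI)
    fix f g assume f: "f \<in> fa_carrier (verts G1 \<times> verts H1)" and g: "g \<in> fa_carrier (verts G1 \<times> verts H1)"
    show "lc_map H2 \<phi>1 \<psi>1 (fa_add f g) = fa_add (lc_map H2 \<phi>1 \<psi>1 f) (lc_map H2 \<phi>1 \<psi>1 g)"
      unfolding lc_map_def by (rule ext_add[OF map_cU[OF f] map_cU[OF g]])
    show "lc_map H2 \<phi>1 \<psi>1 (fa_mult f g) = fa_mult (lc_map H2 \<phi>1 \<psi>1 f) (lc_map H2 \<phi>1 \<psi>1 g)"
      unfolding lc_map_def by (rule ext_mult[OF map_cU[OF f] map_cU[OF g]])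
  qed
  have P5: "\<forall>c. \<forall>f \<in> fa_carrier (verts G1 \<times> verts H1).
        lc_map H2 \<phi>1 \<psi>1 (fa_smult c f) = fa_smult c (lc_map H2 \<phi>1 \<psi>1 f)"
    unfolding lc_map_def using map_cU ext_smult by blast
  have P6: "\<forall>f \<in> fa_carrier (verts G1 \<times> verts H1). lc_equiv G1 H1 (lc_map H1 id id f) f"
    by (simp add: map_id lc_equiv_def diff_self lc_ideal.zero)
  have P7: "\<forall>f \<in> fa_carrier (verts G1 \<times> verts H1).
        lc_equiv G3 H3 (lc_map H3 \<phi>2 \<psi>2 (lc_map H2 \<phi>1 \<psi>1 f))
                       (lc_map H3 (\<phi>2 \<circ> \<phi>1) (\<psi>1 \<circ> \<psi>2) f)"
    by (simp add: map_comp[OF assms(5) assms(6) assms(10)] lc_equiv_def diff_self lc_ideal.zero)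
  show ?thesis using P1 P2 P3 P4 P5 P6 P7 by blast
qed

end
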